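(* An $S$-claw $\mathcal{F}=(f_s:I_s\to[n]\mid s\in S)$ in $\Delta$ is strongly biCartesian if and only if it is compatible.
   Context: $\Delta$: simplex category of nonempty finite linear orders $[n]$ and weakly monotone maps. An $S$-claw on $[n]$ ($S$ finite) is a family of morphisms $f_s:I_s\to[n]$. It is strongly biCartesian if it extends to an $S$-cube $Q:\mathcal{P}(S)^{\mathrm{op}}\to\Delta$ ($\mathcal{P}(S)$ the subset poset) with $Q(\emptyset)=[n]$, $Q(\{s\})\to Q(\emptyset)$ equal to $f_s$, such that every square $Q(T\cup\{s,s'\})\to Q(T\cup\{s\}),Q(T\cup\{s'\})\to Q(T)$ ($s\neq s'\notin T$) is both a pullback and a pushout in $\Delta$. It is compatible if (BC1) for each $i\in[n]$ at most one $s$ has $f_s^{-1}\{i\}$ not a singleton, and (BC2) for each $0<i\le n$ at most one $s$ has $\{i-1,i\}\not\subseteq f_s(I_s)$. *)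

theory Defs
  imports Main
begin

text \<open>The object [n] is represented by the natural number n,
  standing for the linear order {0..n}. A morphism [m] \<rightarrow> [n] is a function
  nat \<Rightarrow> nat that is weakly monotone on {0..m} and maps {0..m} into {0..n};
  values outside {0..m} are irrelevant, so equality of morphisms [m] \<rightarrow> [n] is
  pointwise equality on {0..m}.\<close>

definition dhom :: "nat \<Rightarrow> nat \<Rightarrow> (nat \<Rightarrow> nat) \<Rightarrow> bool" where
  "dhom m n f \<longleftrightarrow> (\<forall>i\<le>m. f i \<le> n) \<and> (\<forall>i j. i \<le> j \<longrightarrow> j \<le> m \<longrightarrow> f i \<le> f j)"

definition deq :: "nat \<Rightarrow> (nat \<Rightarrow> nat) \<Rightarrow> (nat \<Rightarrow> nat) \<Rightarrow> bool" where
  "deq m f g \<longleftrightarrow> (\<forall>i\<le>m. f i = g i)"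

definition is_pullback ::
  "nat \<Rightarrow> nat \<Rightarrow> nat \<Rightarrow> nat \<Rightarrow> (nat \<Rightarrow> nat) \<Rightarrow> (nat \<Rightarrow> nat) \<Rightarrow> (nat \<Rightarrow> nat) \<Rightarrow> (nat \<Rightarrow> nat) \<Rightarrow> bool" where
  "is_pullback A B C D a a' g h \<longleftrightarrow>
     (\<forall>k u v. dhom k B u \<longrightarrow> dhom k C v \<longrightarrow> deq k (g \<circ> u) (h \<circ> v) \<longrightarrow>
        (\<exists>w. dhom k A w \<and> deq k (a \<circ> w) u \<and> deq k (a' \<circ> w) v) \<and>
        (\<forall>w w'. dhom k A w \<longrightarrow> deq k (a \<circ> w) u \<longrightarrow> deq k (a' \<circ> w) v \<longrightarrow>
                dhom k A w' \<longrightarrow> deq k (a \<circ> w') u \<longrightarrow> deq k (a' \<circ> w') v \<longrightarrow> deq k w w'))"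

definition is_pushout ::
  "nat \<Rightarrow> nat \<Rightarrow> nat \<Rightarrow> nat \<Rightarrow> (nat \<Rightarrow> nat) \<Rightarrow> (nat \<Rightarrow> nat) \<Rightarrow> (nat \<Rightarrow> nat) \<Rightarrow> (nat \<Rightarrow> nat) \<Rightarrow> bool" where
  "is_pushout A B C D a a' g h \<longleftrightarrow>
     (\<forall>k u v. dhom B k u \<longrightarrow> dhom C k v \<longrightarrow> deq A (u \<circ> a) (v \<circ> a') \<longrightarrow>
        (\<exists>w. dhom D k w \<and> deq B (w \<circ> g) u \<and> deq C (w \<circ> h) v) \<and>
        (\<forall>w w'. dhom D k w \<longrightarrow> deq B (w \<circ> g) u \<longrightarrow> deq C (w \<circ> h) v \<longrightarrow>
                dhom D k w' \<longrightarrow> deq B (w' \<circ> g) u \<longrightarrow> deq C (w' \<circ> h) v \<longrightarrow> deq D w w'))"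

text \<open>An S-cube Q : P(S)^op \<rightarrow> \<Delta>: objects Qo T for T \<subseteq> S, and for T \<subseteq> T' \<subseteq> S
  a morphism Qm T' T : [Qo T'] \<rightarrow> [Qo T], functorially.\<close>

definition is_cube :: "'s set \<Rightarrow> ('s set \<Rightarrow> nat) \<Rightarrow> ('s set \<Rightarrow> 's set \<Rightarrow> nat \<Rightarrow> nat) \<Rightarrow> bool" where
  "is_cube S Qo Qm \<longleftrightarrow>
     (\<forall>T T'. T \<subseteq> T' \<longrightarrow> T' \<subseteq> S \<longrightarrow> dhom (Qo T') (Qo T) (Qm T' T)) \<and>
     (\<forall>T. T \<subseteq> S \<longrightarrow> deq (Qo T) (Qm T T) id) \<and>
     (\<forall>T T' T''. T \<subseteq> T' \<longrightarrow> T' \<subseteq> T'' \<longrightarrow> T'' \<subseteq> S \<longrightarrow>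
        deq (Qo T'') (Qm T'' T) (Qm T' T \<circ> Qm T'' T'))"

definition strongly_biCartesian ::
  "'s set \<Rightarrow> nat \<Rightarrow> ('s \<Rightarrow> nat) \<Rightarrow> ('s \<Rightarrow> nat \<Rightarrow> nat) \<Rightarrow> bool" where
  "strongly_biCartesian S n I f \<longleftrightarrow>
     (\<exists>Qo Qm. is_cube S Qo Qm \<and> Qo {} = n \<and>
        (\<forall>s\<in>S. Qo {s} = I s \<and> deq (I s) (Qm {s} {}) (f s)) \<and>
        (\<forall>T s s'. s \<in> S \<longrightarrow> s' \<in> S \<longrightarrow> s \<noteq> s' \<longrightarrow> T \<subseteq> S - {s, s'} \<longrightarrow>
           is_pullback (Qo (T \<union> {s, s'})) (Qo (T \<union> {s})) (Qo (T \<union> {s'})) (Qo T)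
              (Qm (T \<union> {s, s'}) (T \<union> {s})) (Qm (T \<union> {s, s'}) (T \<union> {s'}))
              (Qm (T \<union> {s}) T) (Qm (T \<union> {s'}) T) \<and>
           is_pushout (Qo (T \<union> {s, s'})) (Qo (T \<union> {s})) (Qo (T \<union> {s'})) (Qo T)
              (Qm (T \<union> {s, s'}) (T \<union> {s})) (Qm (T \<union> {s, s'}) (T \<union> {s'}))
              (Qm (T \<union> {s}) T) (Qm (T \<union> {s'}) T)))"

text \<open>Compatible S-claw: conditions (BC1) and (BC2).\<close>

definition compatible ::
  "'s set \<Rightarrow> nat \<Rightarrow> ('s \<Rightarrow> nat) \<Rightarrow> ('s \<Rightarrow> nat \<Rightarrow> nat) \<Rightarrow> bool" where
  "compatible S n I f \<longleftrightarrow>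
     (\<forall>i\<le>n. \<forall>s\<in>S. \<forall>s'\<in>S.
        (\<nexists>j. {x. x \<le> I s \<and> f s x = i} = {j}) \<longrightarrow>
        (\<nexists>j. {x. x \<le> I s' \<and> f s' x = i} = {j}) \<longrightarrow> s = s') \<and>
     (\<forall>i. 0 < i \<longrightarrow> i \<le> n \<longrightarrow> (\<forall>s\<in>S. \<forall>s'\<in>S.
        \<not> {i - 1, i} \<subseteq> f s ` {0..I s} \<longrightarrow>
        \<not> {i - 1, i} \<subseteq> f s' ` {0..I s'} \<longrightarrow> s = s'))"

end

theory Submission
  imports Defs
begin


definition pos :: "(nat \<Rightarrow> nat) \<Rightarrow> nat \<Rightarrow> nat" where
  "pos c i = sum c {..<i}"

definition fib :: "(nat \<Rightarrow> nat) \<Rightarrow> nat \<Rightarrow> nat" where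
  "fib c x = (LEAST i. x < pos c (Suc i))"

lemma pos_Suc: "pos c (Suc i) = pos c i + c i"
  by (simp add: pos_def)

lemma pos_mono: "i \<le> j \<Longrightarrow> pos c i \<le> pos c j"
  unfolding pos_def by (rule sum_mono2) auto

lemma pos_lt: "i < j \<Longrightarrow> pos c i + c i \<le> pos c j"
  by (metis Suc_leI pos_Suc pos_mono)

lemma fib_props:
  assumes "x < pos c (Suc n)"
  shows "fib c x \<le> n \<and> pos c (fib c x) \<le> x \<and> x < pos c (fib c x) + c (fib c x)"
proof -
  let ?i = "fib c x"
  have ex: "x < pos c (Suc ?i)" unfolding fib_def by (rule LeastI[of _ n]) (rule assms)
  have le: "?i \<le> n" unfolding fib_def by (rule Least_le) (rule assms)
  have "pos c ?i \<le> x"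
  proof (cases ?i)
    case 0 then show ?thesis by (simp add: pos_def)
  next
    case (Suc j)
    have "\<not> x < pos c (Suc j)"
    proof
      assume "x < pos c (Suc j)"
      then have "?i \<le> j" unfolding fib_def by (rule Least_le)
      with Suc show False by simp
    qed
    with Suc show ?thesis by simp
  qed
  with ex le show ?thesis by (simp add: pos_Suc)
qed

lemma fib_eq:
  assumes "pos c i \<le> x" "x < pos c i + c i"
  shows "fib c x = i"
proof -
  have "x < pos c (Suc i)" using assms by (simp add: pos_Suc)
  moreover have "\<And>j. x < pos c (Suc j) \<Longrightarrow> i \<le> j"
  proof (rule ccontr)
    fix j assume "x < pos c (Suc j)" "\<not> i \<le> j"
    then have "pos c (Suc j) \<le> pos c i" by (intro pos_mono) simp
    with assms \<open>x < pos c (Suc j)\<close> show False by simp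
  qed
  ultimately show ?thesis unfolding fib_def by (intro Least_equality) auto
qed

lemma fib_pt: "r < c i \<Longrightarrow> fib c (pos c i + r) = i"
  by (rule fib_eq) auto

lemma pt_lt_tot: "i \<le> n \<Longrightarrow> r < c i \<Longrightarrow> pos c i + r < pos c (Suc n)"
  by (metis add_less_cancel_left le_imp_less_Suc order_less_le_trans pos_lt)

lemma fib_mono:
  assumes "x \<le> y" "y < pos c (Suc n)"
  shows "fib c x \<le> fib c y"
proof (rule ccontr)
  assume "\<not> fib c x \<le> fib c y"
  then have "pos c (fib c y) + c (fib c y) \<le> pos c (fib c x)" by (intro pos_lt) simp
  with fib_props[OF assms(2)] fib_props[of x c n] assms show False by linarith
qed



definition mp :: "(nat \<Rightarrow> nat) \<Rightarrow> (nat \<Rightarrow> nat) \<Rightarrow> nat \<Rightarrow> nat" where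
  "mp c d x = pos d (fib c x) + min (x - pos c (fib c x)) (d (fib c x) - 1)"

lemma decomp:
  assumes "x < pos c (Suc n)"
  obtains i r where "i \<le> n" "r < c i" "x = pos c i + r"
  using fib_props[OF assms] by (metis le_add_diff_inverse less_diff_conv2 add.commute)

lemma mp_pt: "r < c i \<Longrightarrow> mp c d (pos c i + r) = pos d i + min r (d i - 1)"
  by (simp add: mp_def fib_pt)

lemma mp_dhom:
  assumes "\<forall>i\<le>n. 0 < c i \<longrightarrow> 0 < d i" "0 < pos c (Suc n)"
  shows "dhom (pos c (Suc n) - 1) (pos d (Suc n) - 1) (mp c d)"
  unfolding dhom_def
proof (intro conjI allI impI)
  fix x assume "x \<le> pos c (Suc n) - 1"
  then have "x < pos c (Suc n)" using assms(2) by linarith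
  then obtain i r where ir: "i \<le> n" "r < c i" "x = pos c i + r" by (rule decomp)
  then have "0 < d i" using assms by auto
  then have "pos d i + min r (d i - 1) < pos d (Suc n)" using ir by (intro pt_lt_tot) auto
  then show "mp c d x \<le> pos d (Suc n) - 1" using ir mp_pt by simp
next
  fix x y assume xy: "x \<le> y" "y \<le> pos c (Suc n) - 1"
  then have "y < pos c (Suc n)" "x < pos c (Suc n)" using assms(2) by linarith+
  obtain i r where ir: "i \<le> n" "r < c i" "x = pos c i + r" by (rule decomp[OF \<open>x < _\<close>])
  obtain j t where jt: "j \<le> n" "t < c j" "y = pos c j + t" by (rule decomp[OF \<open>y < _\<close>])
  have "i \<le> j" using fib_mono[OF xy(1) \<open>y < _\<close>] ir jt by (simp add: fib_pt)
  have "0 < d i" using assms ir by auto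
  show "mp c d x \<le> mp c d y"
  proof (cases "i = j")
    case True
    then show ?thesis using ir jt xy(1) by (simp add: mp_pt)
  next
    case False
    then have "i < j" using \<open>i \<le> j\<close> by simp
    then have "pos d i + d i \<le> pos d j" by (rule pos_lt)
    then show ?thesis using ir jt \<open>0 < d i\<close> by (simp add: mp_pt)
  qed
qed

lemma mp_id: "x < pos c (Suc n) \<Longrightarrow> mp c c x = x"
  by (erule decomp) (simp add: mp_pt)

lemma mp_comp:
  assumes "\<forall>i\<le>n. 0 < c i \<longrightarrow> 0 < d i \<and> e i \<le> d i" "x < pos c (Suc n)"
  shows "mp d e (mp c d x) = mp c e x"
proof -
  obtain i r where ir: "i \<le> n" "r < c i" "x = pos c i + r" by (rule decomp[OF assms(2)])
  then have "0 < d i" "e i \<le> d i" using assms by auto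
  then show ?thesis using ir by (simp add: mp_pt)
qed



lemma tot_pos: "i \<le> n \<Longrightarrow> 0 < c i \<Longrightarrow> 0 < pos c (Suc n)"
  using pt_lt_tot[of i n 0 c] by simp

lemma tot_pos_ex: "0 < pos c (Suc n) \<Longrightarrow> \<exists>i\<le>n. 0 < c i"
proof -
  assume a: "0 < pos c (Suc n)"
  obtain i r where "i \<le> n" "r < c i" "0 = pos c i + r" by (rule decomp[OF a])
  then show ?thesis by auto
qed

locale sq =
  fixes n :: nat and cA cB cC cD p q :: "nat \<Rightarrow> nat"
  assumes prodB: "\<And>i. i \<le> n \<Longrightarrow> cB i = cD i * p i"
    and prodC: "\<And>i. i \<le> n \<Longrightarrow> cC i = cD i * q i"
    and prodA: "\<And>i. i \<le> n \<Longrightarrow> cA i = cD i * p i * q i"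
    and H1: "\<And>i. i \<le> n \<Longrightarrow> (cD i \<noteq> 1 \<longrightarrow> p i = 1 \<and> q i = 1) \<and> (p i \<noteq> 1 \<longrightarrow> q i = 1)"
    and H0: "0 < pos cA (Suc n)"
begin

lemma cases3:
  assumes "i \<le> n"
  obtains "cA i = cD i" "cB i = cD i" "cC i = cD i" "p i = 1" "q i = 1"
   | "cD i = 1" "cC i = 1" "cA i = cB i" "q i = 1" "cB i = p i"
   | "cD i = 1" "cB i = 1" "cA i = cC i" "p i = 1" "cC i = q i"
proof -
  have h: "(cD i \<noteq> 1 \<longrightarrow> p i = 1 \<and> q i = 1) \<and> (p i \<noteq> 1 \<longrightarrow> q i = 1)" by (rule H1[OF assms])
  show ?thesis
  proof (cases "p i = 1 \<and> q i = 1")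
    case True then show ?thesis using that(1) prodA[OF assms] prodB[OF assms] prodC[OF assms] by simp
  next
    case False
    then have "cD i = 1" using h by blast
    then show ?thesis using h False that(2,3) prodA[OF assms] prodB[OF assms] prodC[OF assms] by auto
  qed
qed

lemma totA: "0 < pos cA (Suc n)" by (rule H0)
lemma totB: "0 < pos cB (Suc n)"
proof -
  obtain i where i: "i \<le> n" "0 < cA i" using tot_pos_ex[OF H0] by blast
  then have "0 < cB i" by (cases rule: cases3[OF i(1)]) auto
  then show ?thesis using i(1) by (rule tot_pos[rotated])
qed
lemma totC: "0 < pos cC (Suc n)"
proof -
  obtain i where i: "i \<le> n" "0 < cA i" using tot_pos_ex[OF H0] by blast
  then have "0 < cC i" by (cases rule: cases3[OF i(1)]) auto
  then show ?thesis using i(1) by (rule tot_pos[rotated])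
qed
lemma totD: "0 < pos cD (Suc n)"
proof -
  obtain i where i: "i \<le> n" "0 < cA i" using tot_pos_ex[OF H0] by blast
  then have "0 < cD i" by (cases rule: cases3[OF i(1)]) auto
  then show ?thesis using i(1) by (rule tot_pos[rotated])
qed

lemma pb_point:
  assumes "b < pos cB (Suc n)" "c < pos cC (Suc n)" "mp cB cD b = mp cC cD c"
  shows "fib cC c = fib cB b \<and> cB (fib cB b) > 0 \<and>
    max (b - pos cB (fib cB b)) (c - pos cC (fib cB b)) < cA (fib cB b) \<and>
    mp cA cB (pos cA (fib cB b) + max (b - pos cB (fib cB b)) (c - pos cC (fib cB b))) = b \<and>
    mp cA cC (pos cA (fib cB b) + max (b - pos cB (fib cB b)) (c - pos cC (fib cB b))) = c"
proof -
  obtain i r where ir: "i \<le> n" "r < cB i" "b = pos cB i + r" by (rule decomp[OF assms(1)])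
  obtain j t where jt: "j \<le> n" "t < cC j" "c = pos cC j + t" by (rule decomp[OF assms(2)])
  have fi: "fib cB b = i" using ir fib_pt by simp
  have fj: "fib cC c = j" using jt fib_pt by simp
  have Di: "0 < cD i" using ir by (cases rule: cases3[OF ir(1)]) auto
  have Dj: "0 < cD j" using jt by (cases rule: cases3[OF jt(1)]) auto
  have e1: "mp cB cD b = pos cD i + min r (cD i - 1)" using ir mp_pt by simp
  have e2: "mp cC cD c = pos cD j + min t (cD j - 1)" using jt mp_pt by simp
  have "fib cD (mp cB cD b) = i" using e1 Di by (simp add: fib_pt)
  moreover have "fib cD (mp cC cD c) = j" using e2 Dj by (simp add: fib_pt)
  ultimately have ij: "i = j" using assms(3) by simp
  have rt: "min r (cD i - 1) = min t (cD i - 1)" using e1 e2 assms(3) ij by simp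
  have bi: "b - pos cB i = r" "c - pos cC i = t" using ir jt ij by auto
  show ?thesis
  proof (cases rule: cases3[OF ir(1)])
    case 1
    then have "r = t" using rt ir jt ij by simp
    then show ?thesis using 1 ir jt ij fi fj bi by (simp add: mp_pt fib_pt)
  next
    case 2
    then have "t = 0" using jt ij by simp
    then show ?thesis using 2 ir jt ij fi fj bi by (simp add: mp_pt fib_pt)
  next
    case 3
    then have "r = 0" using ir by simp
    then show ?thesis using 3 ir jt ij fi fj bi by (simp add: mp_pt fib_pt)
  qed
qed

lemma pb_inj:
  assumes "z < pos cA (Suc n)" "z' < pos cA (Suc n)"
    "mp cA cB z = mp cA cB z'" "mp cA cC z = mp cA cC z'"
  shows "z = z'"
proof -
  obtain i r where ir: "i \<le> n" "r < cA i" "z = pos cA i + r" by (rule decomp[OF assms(1)])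
  obtain j t where jt: "j \<le> n" "t < cA j" "z' = pos cA j + t" by (rule decomp[OF assms(2)])
  have Bi: "0 < cB i" using ir by (cases rule: cases3[OF ir(1)]) auto
  have Bj: "0 < cB j" using jt by (cases rule: cases3[OF jt(1)]) auto
  have e1: "mp cA cB z = pos cB i + min r (cB i - 1)" using ir mp_pt by simp
  have e2: "mp cA cB z' = pos cB j + min t (cB j - 1)" using jt mp_pt by simp
  have "fib cB (mp cA cB z) = i" using e1 Bi by (simp add: fib_pt)
  moreover have "fib cB (mp cA cB z') = j" using e2 Bj by (simp add: fib_pt)
  ultimately have ij: "i = j" using assms(3) by simp
  have f1: "mp cA cC z = pos cC i + min r (cC i - 1)" using ir mp_pt by simp
  have f2: "mp cA cC z' = pos cC i + min t (cC i - 1)" using jt ij mp_pt by simp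
  have g1: "min r (cB i - 1) = min t (cB i - 1)" using e1 e2 ij assms(3) by simp
  have g2: "min r (cC i - 1) = min t (cC i - 1)" using f1 f2 assms(4) by simp
  have "r = t"
  proof (cases rule: cases3[OF ir(1)])
    case 1 then show ?thesis using g1 ir jt ij by simp
  next
    case 2 then show ?thesis using g1 ir jt ij by simp
  next
    case 3 then show ?thesis using g2 ir jt ij by simp
  qed
  then show ?thesis using ir jt ij by simp
qed

lemma fibA_mono:
  assumes "i \<le> j" "r < cA i" "i = j \<Longrightarrow> r \<le> t"
  shows "pos cA i + r \<le> pos cA j + t"
proof (cases "i = j")
  case True then show ?thesis using assms by simp
next
  case False
  then have "pos cA i + cA i \<le> pos cA j" using assms by (intro pos_lt) simp
  then show ?thesis using assms by simp
qed

lemma dhom_lt: "dhom k (N - 1) u \<Longrightarrow> 0 < N \<Longrightarrow> x \<le> k \<Longrightarrow> u x < N"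
  unfolding dhom_def by fastforce

lemma pullback:
  "is_pullback (pos cA (Suc n) - 1) (pos cB (Suc n) - 1) (pos cC (Suc n) - 1) (pos cD (Suc n) - 1)
     (mp cA cB) (mp cA cC) (mp cB cD) (mp cC cD)"
  unfolding is_pullback_def
proof (intro allI impI conjI)
  fix k u v
  assume u: "dhom k (pos cB (Suc n) - 1) u" and v: "dhom k (pos cC (Suc n) - 1) v"
    and uv: "deq k (mp cB cD \<circ> u) (mp cC cD \<circ> v)"
  have ub: "\<And>x. x \<le> k \<Longrightarrow> u x < pos cB (Suc n)" using u totB by (rule dhom_lt)
  have vb: "\<And>x. x \<le> k \<Longrightarrow> v x < pos cC (Suc n)" using v totC by (rule dhom_lt)
  have eq: "\<And>x. x \<le> k \<Longrightarrow> mp cB cD (u x) = mp cC cD (v x)" using uv unfolding deq_def by simp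
  define w where "w x = pos cA (fib cB (u x)) + max (u x - pos cB (fib cB (u x))) (v x - pos cC (fib cB (u x)))" for x
  have P: "fib cC (v x) = fib cB (u x) \<and> cB (fib cB (u x)) > 0 \<and>
    max (u x - pos cB (fib cB (u x))) (v x - pos cC (fib cB (u x))) < cA (fib cB (u x)) \<and>
    mp cA cB (w x) = u x \<and> mp cA cC (w x) = v x" if "x \<le> k" for x
    unfolding w_def by (rule pb_point[OF ub[OF that] vb[OF that] eq[OF that]])
  show "\<exists>w. dhom k (pos cA (Suc n) - 1) w \<and> deq k (mp cA cB \<circ> w) u \<and> deq k (mp cA cC \<circ> w) v"
  proof (intro exI conjI)
    show "deq k (mp cA cB \<circ> w) u" using P unfolding deq_def by simp
    show "deq k (mp cA cC \<circ> w) v" using P unfolding deq_def by simp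
    show "dhom k (pos cA (Suc n) - 1) w" unfolding dhom_def
    proof (intro conjI allI impI)
      fix x assume xk: "x \<le> k"
      have "fib cB (u x) \<le> n" using fib_props[OF ub[OF xk]] by simp
      then have "w x < pos cA (Suc n)" using P[OF xk] unfolding w_def by (intro pt_lt_tot) auto
      then show "w x \<le> pos cA (Suc n) - 1" by simp
    next
      fix x y assume xy: "x \<le> y" "y \<le> k"
      then have xk: "x \<le> k" by simp
      have u_le: "u x \<le> u y" and v_le: "v x \<le> v y" using u v xy unfolding dhom_def by auto
      have fi: "fib cB (u x) \<le> fib cB (u y)" by (rule fib_mono[OF u_le ub[OF xy(2)]])
      show "w x \<le> w y" unfolding w_def
      proof (rule fibA_mono)
        show "fib cB (u x) \<le> fib cB (u y)" by (rule fi)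
        show "max (u x - pos cB (fib cB (u x))) (v x - pos cC (fib cB (u x))) < cA (fib cB (u x))"
          using P[OF xk] by simp
        assume "fib cB (u x) = fib cB (u y)"
        then show "max (u x - pos cB (fib cB (u x))) (v x - pos cC (fib cB (u x)))
          \<le> max (u y - pos cB (fib cB (u y))) (v y - pos cC (fib cB (u y)))"
          using u_le v_le by (metis diff_le_mono max.mono)
      qed
    qed
  qed
next
  fix k u v w w'
  assume a: "dhom k (pos cA (Suc n) - 1) w" "deq k (mp cA cB \<circ> w) u" "deq k (mp cA cC \<circ> w) v"
    "dhom k (pos cA (Suc n) - 1) w'" "deq k (mp cA cB \<circ> w') u" "deq k (mp cA cC \<circ> w') v"
  show "deq k w w'" unfolding deq_def
  proof (intro allI impI)
    fix x assume xk: "x \<le> k"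
    show "w x = w' x"
      by (rule pb_inj[OF dhom_lt[OF a(1) totA xk] dhom_lt[OF a(4) totA xk]])
        (use a xk in \<open>auto simp: deq_def\<close>)
  qed
qed

end


lemma mono_Suc_bounded:
  assumes "\<And>y. y < N \<Longrightarrow> w y \<le> (w (Suc y) :: nat)"
  shows "x \<le> y \<Longrightarrow> y \<le> N \<Longrightarrow> w x \<le> w y"
proof (induction y)
  case 0 then show ?case by simp
next
  case (Suc y)
  show ?case
  proof (cases "x = Suc y")
    case True then show ?thesis by simp
  next
    case False
    then have "w x \<le> w y" using Suc by simp
    also have "w y \<le> w (Suc y)" using assms Suc by simp
    finally show ?thesis .
  qed
qed

locale sq2 = sq +
  assumes H2: "\<And>i. 0 < i \<Longrightarrow> i \<le> n \<Longrightarrow>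
     \<not> ((cD (i-1) = 0 \<or> cD i = 0) \<and> (p (i-1) = 0 \<or> p i = 0)) \<and>
     \<not> ((cD (i-1) = 0 \<or> cD i = 0) \<and> (q (i-1) = 0 \<or> q i = 0)) \<and>
     \<not> ((p (i-1) = 0 \<or> p i = 0) \<and> (q (i-1) = 0 \<or> q i = 0))"
begin

lemma noA:
  assumes "i < j" "j \<le> n" "q i = 0" "p j = 0" "\<And>m. i < m \<Longrightarrow> m < j \<Longrightarrow> cD m = 0"
  shows False
proof (cases "j = Suc i")
  case True then show False using H2[of j] assms by auto
next
  case False
  then have "cD (Suc i) = 0" using assms by auto
  then show False using H2[of "Suc i"] assms by auto
qed

lemma noB:
  assumes "i < j" "j \<le> n" "p i = 0" "q j = 0" "\<And>m. i < m \<Longrightarrow> m < j \<Longrightarrow> cD m = 0"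
  shows False
proof (cases "j = Suc i")
  case True then show False using H2[of j] assms by auto
next
  case False
  then have "cD (j - 1) = 0" using assms by auto
  then show False using H2[of j] assms by auto
qed

lemma gap:
  assumes "i < j" "r < cD i" "Suc (pos cD i + r) = pos cD j + t"
  shows "r = cD i - 1" "t = 0" "\<And>m. i < m \<Longrightarrow> m < j \<Longrightarrow> cD m = 0"
proof -
  have a: "pos cD i + cD i \<le> pos cD j" using assms(1) by (rule pos_lt)
  then show r: "r = cD i - 1" "t = 0" using assms by linarith+
  fix m assume m: "i < m" "m < j"
  have "pos cD i + cD i \<le> pos cD m" using m(1) by (rule pos_lt)
  moreover have "pos cD m + cD m \<le> pos cD j" using m(2) by (rule pos_lt)
  ultimately show "cD m = 0" using assms a r by linarith
qed

lemma BD: "i \<le> n \<Longrightarrow> 0 < cB i \<Longrightarrow> cD i \<le> cB i"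
  by (cases rule: cases3) auto
lemma CD: "i \<le> n \<Longrightarrow> 0 < cC i \<Longrightarrow> cD i \<le> cC i"
  by (cases rule: cases3) auto
lemma B0: "i \<le> n \<Longrightarrow> cB i = 0 \<Longrightarrow> cC i = cD i \<and> cA i = 0"
  by (cases rule: cases3) auto
lemma ABC: "i \<le> n \<Longrightarrow> 0 < cB i \<Longrightarrow> 0 < cC i \<Longrightarrow> 0 < cA i \<and> cB i \<le> cA i \<and> cC i \<le> cA i"
  by (cases rule: cases3) auto

lemma mp_pt0: "0 < c i \<Longrightarrow> mp c d (pos c i) = pos d i"
  using mp_pt[of 0 c i d] by simp

definition wfun :: "(nat \<Rightarrow> nat) \<Rightarrow> (nat \<Rightarrow> nat) \<Rightarrow> nat \<Rightarrow> nat" where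
  "wfun u v y = (if 0 < cB (fib cD y) then u (pos cB (fib cD y) + (y - pos cD (fib cD y)))
               else v (pos cC (fib cD y) + (y - pos cD (fib cD y))))"

lemma wf_pt: "r < cD i \<Longrightarrow> wfun u v (pos cD i + r) = (if 0 < cB i then u (pos cB i + r) else v (pos cC i + r))"
  by (simp add: wfun_def fib_pt)

lemma dmono: "dhom N k u \<Longrightarrow> 0 < M \<Longrightarrow> N = M - 1 \<Longrightarrow> a \<le> b \<Longrightarrow> b < M \<Longrightarrow> u a \<le> u b"
  unfolding dhom_def by auto

lemma pushout_exist:
  assumes u: "dhom (pos cB (Suc n) - 1) k u" and v: "dhom (pos cC (Suc n) - 1) k v"
    and comp: "\<And>z. z < pos cA (Suc n) \<Longrightarrow> u (mp cA cB z) = v (mp cA cC z)"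
  shows "dhom (pos cD (Suc n) - 1) k (wfun u v)"
    "\<And>b. b < pos cB (Suc n) \<Longrightarrow> wfun u v (mp cB cD b) = u b"
    "\<And>c. c < pos cC (Suc n) \<Longrightarrow> wfun u v (mp cC cD c) = v c"
proof -
  have um: "\<And>a b. a \<le> b \<Longrightarrow> b < pos cB (Suc n) \<Longrightarrow> u a \<le> u b"
    using dmono[OF u totB refl] by blast
  have vm: "\<And>a b. a \<le> b \<Longrightarrow> b < pos cC (Suc n) \<Longrightarrow> v a \<le> v b"
    using dmono[OF v totC refl] by blast
  have uk: "\<And>a. a < pos cB (Suc n) \<Longrightarrow> u a \<le> k" using u unfolding dhom_def by auto
  have vk: "\<And>a. a < pos cC (Suc n) \<Longrightarrow> v a \<le> k" using v unfolding dhom_def by auto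
  show gb: "wfun u v (mp cB cD b) = u b" if b: "b < pos cB (Suc n)" for b
  proof -
    obtain i r where ir: "i \<le> n" "r < cB i" "b = pos cB i + r" by (rule decomp[OF b])
    have Di: "0 < cD i" using ir by (cases rule: cases3[OF ir(1)]) auto
    have e: "wfun u v (mp cB cD b) = u (pos cB i + min r (cD i - 1))"
      using ir Di by (simp add: mp_pt wf_pt)
    show ?thesis
    proof (cases rule: cases3[OF ir(1)])
      case 1 then show ?thesis using e ir by simp
    next
      case 2
      have z1: "pos cA i + r < pos cA (Suc n)" using ir 2 by (intro pt_lt_tot) auto
      have z0: "pos cA i + 0 < pos cA (Suc n)" using ir 2 by (intro pt_lt_tot) auto
      have "u (pos cB i + r) = v (pos cC i)" using comp[OF z1] 2 ir by (simp add: mp_pt mp_pt0)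
      moreover have "u (pos cB i) = v (pos cC i)" using comp[OF z0] 2 ir by (simp add: mp_pt mp_pt0)
      ultimately show ?thesis using e ir 2 by simp
    next
      case 3 then show ?thesis using e ir by simp
    qed
  qed
  show hc: "wfun u v (mp cC cD c) = v c" if c: "c < pos cC (Suc n)" for c
  proof -
    obtain i r where ir: "i \<le> n" "r < cC i" "c = pos cC i + r" by (rule decomp[OF c])
    have Di: "0 < cD i" using ir by (cases rule: cases3[OF ir(1)]) auto
    have e: "wfun u v (mp cC cD c) = (if 0 < cB i then u (pos cB i + min r (cD i - 1)) else v (pos cC i + min r (cD i - 1)))"
      using ir Di by (simp add: mp_pt wf_pt)
    show ?thesis
    proof (cases "0 < cB i")
      case False
      then show ?thesis using e ir B0[OF ir(1)] by simp
    next
      case True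
      have rA: "r < cA i" using ABC[OF ir(1) True] ir by auto
      have z: "pos cA i + r < pos cA (Suc n)" using ir rA by (intro pt_lt_tot) auto
      have cz: "u (mp cA cB (pos cA i + r)) = v (mp cA cC (pos cA i + r))" by (rule comp[OF z])
      show ?thesis
      proof (cases rule: cases3[OF ir(1)])
        case 1 then show ?thesis using e ir cz rA True by (simp add: mp_pt mp_pt0)
      next
        case 2 then show ?thesis using e ir cz rA True by (simp add: mp_pt mp_pt0)
      next
        case 3 then show ?thesis using e ir cz rA True by (simp add: mp_pt mp_pt0)
      qed
    qed
  qed
  show "dhom (pos cD (Suc n) - 1) k (wfun u v)"
    unfolding dhom_def
  proof (intro conjI allI impI)
    fix y assume "y \<le> pos cD (Suc n) - 1"
    then have y: "y < pos cD (Suc n)" using totD by linarith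
    obtain i r where ir: "i \<le> n" "r < cD i" "y = pos cD i + r" by (rule decomp[OF y])
    show "wfun u v y \<le> k"
    proof (cases "0 < cB i")
      case True
      then have "r < cB i" using BD[OF ir(1)] ir by linarith
      then have "pos cB i + r < pos cB (Suc n)" using ir by (intro pt_lt_tot)
      then show ?thesis using ir True uk by (simp add: wf_pt)
    next
      case False
      then have "r < cC i" using B0[OF ir(1)] ir by simp
      then have "pos cC i + r < pos cC (Suc n)" using ir by (intro pt_lt_tot)
      then show ?thesis using ir False vk by (simp add: wf_pt)
    qed
  next
    fix x y assume xy: "x \<le> y" "y \<le> pos cD (Suc n) - 1"
    show "wfun u v x \<le> wfun u v y"
    proof (rule mono_Suc_bounded[OF _ xy])
      fix y assume "y < pos cD (Suc n) - 1"
      then have y: "y < pos cD (Suc n)" and y1: "Suc y < pos cD (Suc n)" by linarith+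
      obtain i r where ir: "i \<le> n" "r < cD i" "y = pos cD i + r" by (rule decomp[OF y])
      obtain j t where jt: "j \<le> n" "t < cD j" "Suc y = pos cD j + t" by (rule decomp[OF y1])
      have "fib cD y \<le> fib cD (Suc y)" by (rule fib_mono[OF _ y1]) simp
      then have ij: "i \<le> j" using ir jt by (simp add: fib_pt)
      show "wfun u v y \<le> wfun u v (Suc y)"
      proof (cases "i = j")
        case True
        then have t: "t = Suc r" using ir jt by simp
        show ?thesis
        proof (cases "0 < cB i")
          case True
          then have "t < cB i" using BD[OF ir(1) True] jt \<open>i = j\<close> by simp
          then have "pos cB i + t < pos cB (Suc n)" using ir by (intro pt_lt_tot)
          then have "u (pos cB i + r) \<le> u (pos cB i + t)" using t um by simp
          moreover have "wfun u v y = u (pos cB i + r)" using ir True by (simp add: wf_pt)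
          moreover have "wfun u v (Suc y) = u (pos cB i + t)"
            using arg_cong[OF jt(3), of "wfun u v"] wf_pt[OF jt(2), of u v] True \<open>i = j\<close> by simp
          ultimately show ?thesis by simp
        next
          case False
          then have "t < cC i" using B0[OF ir(1)] jt \<open>i = j\<close> by simp
          then have "pos cC i + t < pos cC (Suc n)" using ir by (intro pt_lt_tot)
          then have "v (pos cC i + r) \<le> v (pos cC i + t)" using t vm by simp
          moreover have "wfun u v y = v (pos cC i + r)" using ir False by (simp add: wf_pt)
          moreover have "wfun u v (Suc y) = v (pos cC i + t)"
            using arg_cong[OF jt(3), of "wfun u v"] wf_pt[OF jt(2), of u v] False \<open>i = j\<close> by simp
          ultimately show ?thesis by simp
        qed
      next
        case False
        then have ij': "i < j" using ij by simp
        have "Suc (pos cD i + r) = pos cD j + t" using ir(3) jt(3) by simp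
        note G = gap[OF ij' ir(2) this]
        have wy: "wfun u v y = (if 0 < cB i then u (pos cB i + r) else v (pos cC i + r))"
          using ir by (simp add: wf_pt)
        have "wfun u v (Suc y) = wfun u v (pos cD j + t)" using jt(3) by (rule arg_cong)
        also have "\<dots> = (if 0 < cB j then u (pos cB j + t) else v (pos cC j + t))" by (rule wf_pt[OF jt(2)])
        finally have wy1: "wfun u v (Suc y) = (if 0 < cB j then u (pos cB j) else v (pos cC j))"
          using G(2) by simp
        show ?thesis
        proof (cases "0 < cB i"; cases "0 < cB j")
          assume Bi: "0 < cB i" and Bj: "0 < cB j"
          have "r < cB i" using BD[OF ir(1) Bi] ir by linarith
          then have "pos cB i + r \<le> pos cB j" using pos_lt[OF ij', of cB] by linarith
          moreover have "pos cB j + 0 < pos cB (Suc n)" using jt Bj by (intro pt_lt_tot) auto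
          ultimately show ?thesis using wy wy1 Bi Bj um by simp
        next
          assume Bi: "0 < cB i" and Bj: "\<not> 0 < cB j"
          have Cj: "cC j = cD j" using B0[OF jt(1)] Bj by simp
          show ?thesis
          proof (cases "0 < cC i")
            case True
            note A = ABC[OF ir(1) Bi True]
            have z: "pos cA i + (cA i - 1) < pos cA (Suc n)" using ir A by (intro pt_lt_tot) auto
            have e1: "mp cA cB (pos cA i + (cA i - 1)) = pos cB i + (cB i - 1)"
              using A by (subst mp_pt) (auto simp: min_def)
            have e2: "mp cA cC (pos cA i + (cA i - 1)) = pos cC i + (cC i - 1)"
              using A by (subst mp_pt) (auto simp: min_def)
            have "r \<le> cB i - 1" using BD[OF ir(1) Bi] ir by linarith
            moreover have "pos cB i + (cB i - 1) < pos cB (Suc n)" using ir Bi by (intro pt_lt_tot) auto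
            ultimately have "u (pos cB i + r) \<le> u (pos cB i + (cB i - 1))" using um by simp
            also have "\<dots> = v (pos cC i + (cC i - 1))" using comp[OF z] e1 e2 by simp
            also have "\<dots> \<le> v (pos cC j)"
            proof (rule vm)
              show "pos cC i + (cC i - 1) \<le> pos cC j" using pos_lt[OF ij', of cC] True by linarith
              show "pos cC j < pos cC (Suc n)" using pt_lt_tot[OF jt(1), of 0 cC] jt Cj by simp
            qed
            finally show ?thesis using wy wy1 Bi Bj by simp
          next
            case False
            have "q i = 0" using prodC[OF ir(1)] False ir by simp
            moreover have "p j = 0" using prodB[OF jt(1)] Bj jt by simp
            ultimately show ?thesis using noA[OF ij' jt(1)] G(3) by blast
          qed
        next
          assume Bi: "\<not> 0 < cB i" and Bj: "0 < cB j"
          have Ci: "cC i = cD i" using B0[OF ir(1)] Bi by simp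
          show ?thesis
          proof (cases "0 < cC j")
            case True
            note A = ABC[OF jt(1) Bj True]
            have z: "pos cA j + 0 < pos cA (Suc n)" using jt A by (intro pt_lt_tot) auto
            have e1: "mp cA cB (pos cA j + 0) = pos cB j" using A by (simp add: mp_pt mp_pt0)
            have e2: "mp cA cC (pos cA j + 0) = pos cC j" using A by (simp add: mp_pt mp_pt0)
            have "v (pos cC i + r) \<le> v (pos cC j)"
            proof (rule vm)
              show "pos cC i + r \<le> pos cC j" using pos_lt[OF ij', of cC] Ci ir by linarith
              show "pos cC j < pos cC (Suc n)" using pt_lt_tot[OF jt(1), of 0 cC] True by simp
            qed
            also have "\<dots> = u (pos cB j)" using comp[OF z] e1 e2 by simp
            finally show ?thesis using wy wy1 Bi Bj by simp
          next
            case False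
            have "q j = 0" using prodC[OF jt(1)] False jt by simp
            moreover have "p i = 0" using prodB[OF ir(1)] Bi ir by simp
            ultimately show ?thesis using noB[OF ij' jt(1)] G(3) by blast
          qed
        next
          assume Bi: "\<not> 0 < cB i" and Bj: "\<not> 0 < cB j"
          have "r < cC i" using B0[OF ir(1)] Bi ir by simp
          then have "pos cC i + r \<le> pos cC j" using pos_lt[OF ij', of cC] by linarith
          moreover have "pos cC j + 0 < pos cC (Suc n)" using jt Bj B0[OF jt(1)] by (intro pt_lt_tot) auto
          ultimately show ?thesis using wy wy1 Bi Bj vm by simp
        qed
      qed
    qed
  qed
qed

lemma surj_D:
  assumes "y < pos cD (Suc n)"
  shows "(\<exists>b. b < pos cB (Suc n) \<and> mp cB cD b = y) \<or> (\<exists>c. c < pos cC (Suc n) \<and> mp cC cD c = y)"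
proof -
  obtain i r where ir: "i \<le> n" "r < cD i" "y = pos cD i + r" by (rule decomp[OF assms])
  show ?thesis
  proof (cases "0 < cB i")
    case True
    then have r: "r < cB i" using BD[OF ir(1) True] ir by simp
    then have "pos cB i + r < pos cB (Suc n)" using ir by (intro pt_lt_tot)
    moreover have "mp cB cD (pos cB i + r) = y" using r ir by (simp add: mp_pt)
    ultimately show ?thesis by blast
  next
    case False
    then have r: "r < cC i" using B0[OF ir(1)] ir by simp
    then have "pos cC i + r < pos cC (Suc n)" using ir by (intro pt_lt_tot)
    moreover have "mp cC cD (pos cC i + r) = y" using r ir B0[OF ir(1)] False by (simp add: mp_pt)
    ultimately show ?thesis by blast
  qed
qed

lemma pushout:
  "is_pushout (pos cA (Suc n) - 1) (pos cB (Suc n) - 1) (pos cC (Suc n) - 1) (pos cD (Suc n) - 1)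
     (mp cA cB) (mp cA cC) (mp cB cD) (mp cC cD)"
  unfolding is_pushout_def
proof (intro allI impI conjI)
  fix k u v
  assume u: "dhom (pos cB (Suc n) - 1) k u" and v: "dhom (pos cC (Suc n) - 1) k v"
    and uv: "deq (pos cA (Suc n) - 1) (u \<circ> mp cA cB) (v \<circ> mp cA cC)"
  have comp: "\<And>z. z < pos cA (Suc n) \<Longrightarrow> u (mp cA cB z) = v (mp cA cC z)"
    using uv totA unfolding deq_def by fastforce
  note E = pushout_exist[OF u v comp]
  show "\<exists>w. dhom (pos cD (Suc n) - 1) k w \<and> deq (pos cB (Suc n) - 1) (w \<circ> mp cB cD) u \<and>
             deq (pos cC (Suc n) - 1) (w \<circ> mp cC cD) v"
  proof (intro exI conjI)
    show "dhom (pos cD (Suc n) - 1) k (wfun u v)" by (rule E(1))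
    show "deq (pos cB (Suc n) - 1) (wfun u v \<circ> mp cB cD) u"
      unfolding deq_def using E(2) totB by (metis Suc_pred' comp_apply less_Suc_eq_le)
    show "deq (pos cC (Suc n) - 1) (wfun u v \<circ> mp cC cD) v"
      unfolding deq_def using E(3) totC by (metis Suc_pred' comp_apply less_Suc_eq_le)
  qed
next
  fix k u v w w'
  assume a: "deq (pos cB (Suc n) - 1) (w \<circ> mp cB cD) u" "deq (pos cC (Suc n) - 1) (w \<circ> mp cC cD) v"
    "deq (pos cB (Suc n) - 1) (w' \<circ> mp cB cD) u" "deq (pos cC (Suc n) - 1) (w' \<circ> mp cC cD) v"
  show "deq (pos cD (Suc n) - 1) w w'" unfolding deq_def
  proof (intro allI impI)
    fix y assume "y \<le> pos cD (Suc n) - 1"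
    then have y: "y < pos cD (Suc n)" using totD by linarith
    from surj_D[OF y] show "w y = w' y"
    proof
      assume "\<exists>b. b < pos cB (Suc n) \<and> mp cB cD b = y"
      then obtain b where b: "b < pos cB (Suc n)" "mp cB cD b = y" by blast
      then have "b \<le> pos cB (Suc n) - 1" by simp
      then show ?thesis using a(1,3) b unfolding deq_def by force
    next
      assume "\<exists>c. c < pos cC (Suc n) \<and> mp cC cD c = y"
      then obtain c where c: "c < pos cC (Suc n)" "mp cC cD c = y" by blast
      then have "c \<le> pos cC (Suc n) - 1" by simp
      then show ?thesis using a(2,4) c unfolding deq_def by force
    qed
  qed
qed

end


lemma pushout_sym:
  assumes H: "is_pushout A B C D a a' g h" shows "is_pushout A C B D a' a h g"
  unfolding is_pushout_def
proof (intro allI impI)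
  fix k u v assume u: "dhom C k u" and v: "dhom B k v" and e: "deq A (u \<circ> a') (v \<circ> a)"
  have e': "deq A (v \<circ> a) (u \<circ> a')" using e by (auto simp: deq_def)
  have "(\<exists>w. dhom D k w \<and> deq B (w \<circ> g) v \<and> deq C (w \<circ> h) u) \<and>
        (\<forall>w w'. dhom D k w \<longrightarrow> deq B (w \<circ> g) v \<longrightarrow> deq C (w \<circ> h) u \<longrightarrow>
                dhom D k w' \<longrightarrow> deq B (w' \<circ> g) v \<longrightarrow> deq C (w' \<circ> h) u \<longrightarrow> deq D w w')"
    using H v u e' unfolding is_pushout_def by blast
  then show "(\<exists>w. dhom D k w \<and> deq C (w \<circ> h) u \<and> deq B (w \<circ> g) v) \<and>
        (\<forall>w w'. dhom D k w \<longrightarrow> deq C (w \<circ> h) u \<longrightarrow> deq B (w \<circ> g) v \<longrightarrow>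
                dhom D k w' \<longrightarrow> deq C (w' \<circ> h) u \<longrightarrow> deq B (w' \<circ> g) v \<longrightarrow> deq D w w')"
    by blast
qed

lemma nonsingle:
  fixes F :: "nat set"
  assumes "\<not> (\<exists>j. F = {j})"
  shows "F = {} \<or> (\<exists>x y. x < y \<and> x \<in> F \<and> y \<in> F)"
proof (cases "F = {}")
  case False
  then obtain x where x: "x \<in> F" by blast
  then obtain y where y: "y \<in> F" "y \<noteq> x" using assms by blast
  show ?thesis
  proof (cases "x < y")
    case True then show ?thesis using x y by blast
  next
    case False then have "y < x" using y by simp
    then show ?thesis using x y by blast
  qed
qed simp

locale dsq =
  fixes A B C D :: nat and a a' g h :: "nat \<Rightarrow> nat"
  assumes da: "dhom A B a" and da': "dhom A C a'" and dg: "dhom B D g" and dh: "dhom C D h"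
    and comm: "\<And>z. z \<le> A \<Longrightarrow> g (a z) = h (a' z)"
begin

lemma sym: "dsq A C B D a' a h g"
  using da da' dg dh comm by unfold_locales auto

lemma pb_two:
  assumes pb: "is_pullback A B C D a a' g h"
    and b: "b1 < b2" "b2 \<le> B" "g b1 = i" "g b2 = i"
    and c: "c1 < c2" "c2 \<le> C" "h c1 = i" "h c2 = i"
  shows False
proof -
  have ex: "\<exists>z. z \<le> A \<and> a z = b \<and> a' z = c" if "b \<le> B" "c \<le> C" "g b = h c" for b c
  proof -
    have "dhom 0 B (\<lambda>_. b)" "dhom 0 C (\<lambda>_. c)" "deq 0 (g \<circ> (\<lambda>_. b)) (h \<circ> (\<lambda>_. c))"
      using that by (auto simp: dhom_def deq_def)
    then obtain w where "dhom 0 A w" "deq 0 (a \<circ> w) (\<lambda>_. b)" "deq 0 (a' \<circ> w) (\<lambda>_. c)"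
      using pb unfolding is_pullback_def by blast
    then show ?thesis by (intro exI[of _ "w 0"]) (auto simp: dhom_def deq_def)
  qed
  obtain z1 where z1: "z1 \<le> A" "a z1 = b1" "a' z1 = c2" using ex[of b1 c2] b c by auto
  obtain z2 where z2: "z2 \<le> A" "a z2 = b2" "a' z2 = c1" using ex[of b2 c1] b c by auto
  show False
  proof (cases "z1 \<le> z2")
    case True
    then have "a' z1 \<le> a' z2" using da' z2 unfolding dhom_def by blast
    then show False using z1 z2 c by simp
  next
    case False
    then have "a z2 \<le> a z1" using da z1 unfolding dhom_def by auto
    then show False using z1 z2 b by simp
  qed
qed

lemma po_empty_two:
  assumes po: "is_pushout A B C D a a' g h"
    and e: "\<And>b. b \<le> B \<Longrightarrow> g b \<noteq> i"
    and c: "c1 < c2" "c2 \<le> C" "h c1 = i" "h c2 = i"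
  shows False
proof -
  define u where "u b = (if i < g b then 1 else 0::nat)" for b
  define v where "v c = (if c2 \<le> c then 1 else 0::nat)" for c
  have hm: "\<And>x y. x \<le> y \<Longrightarrow> y \<le> C \<Longrightarrow> h x \<le> h y" using dh unfolding dhom_def by blast
  have gm: "\<And>x y. x \<le> y \<Longrightarrow> y \<le> B \<Longrightarrow> g x \<le> g y" using dg unfolding dhom_def by blast
  have "dhom B 1 u" unfolding dhom_def u_def using gm by (auto simp: less_le_trans)
  moreover have "dhom C 1 v" unfolding dhom_def v_def by auto
  moreover have "deq A (u \<circ> a) (v \<circ> a')" unfolding deq_def
  proof (intro allI impI)
    fix z assume z: "z \<le> A"
    have az: "a z \<le> B" "a' z \<le> C" using z da da' unfolding dhom_def by auto
    have gz: "g (a z) \<noteq> i" using e az by simp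
    show "(u \<circ> a) z = (v \<circ> a') z"
    proof (cases "c2 \<le> a' z")
      case True
      then have "i \<le> h (a' z)" using hm[OF True az(2)] c by simp
      then show ?thesis using True gz comm[OF z] by (simp add: u_def v_def)
    next
      case False
      then have "h (a' z) \<le> i" using hm[of "a' z" c2] c by simp
      then show ?thesis using False gz comm[OF z] by (simp add: u_def v_def)
    qed
  qed
  ultimately obtain w where w: "deq C (w \<circ> h) v"
    using po unfolding is_pushout_def by blast
  then have "w (h c1) = v c1" "w (h c2) = v c2" using c unfolding deq_def by auto
  then show False using c by (simp add: v_def)
qed

lemma po_both_empty:
  assumes po: "is_pushout A B C D a a' g h" and i: "i \<le> D"
    and e: "\<And>b. b \<le> B \<Longrightarrow> g b \<noteq> i" and e': "\<And>c. c \<le> C \<Longrightarrow> h c \<noteq> i"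
  shows False
proof -
  define u where "u b = (if i \<le> g b then 1 else 0::nat)" for b
  define v where "v c = (if i \<le> h c then 1 else 0::nat)" for c
  define w1 where "w1 y = (if i \<le> y then 1 else 0::nat)" for y
  define w2 where "w2 y = (if i < y then 1 else 0::nat)" for y
  have hm: "\<And>x y. x \<le> y \<Longrightarrow> y \<le> C \<Longrightarrow> h x \<le> h y" using dh unfolding dhom_def by blast
  have gm: "\<And>x y. x \<le> y \<Longrightarrow> y \<le> B \<Longrightarrow> g x \<le> g y" using dg unfolding dhom_def by blast
  have "dhom B 1 u" unfolding dhom_def u_def using gm by (auto intro: order_trans)
  moreover have "dhom C 1 v" unfolding dhom_def v_def using hm by (auto intro: order_trans)
  moreover have "deq A (u \<circ> a) (v \<circ> a')" unfolding deq_def u_def v_def using comm by simp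
  moreover have "dhom D 1 w1" "dhom D 1 w2" unfolding dhom_def w1_def w2_def by auto
  moreover have "deq B (w1 \<circ> g) u" "deq B (w2 \<circ> g) u"
    unfolding deq_def w1_def w2_def u_def using e by (auto simp: le_less)
  moreover have "deq C (w1 \<circ> h) v" "deq C (w2 \<circ> h) v"
    unfolding deq_def w1_def w2_def v_def using e' by (auto simp: le_less)
  ultimately have "deq D w1 w2" using po unfolding is_pushout_def by blast
  then have "w1 i = w2 i" using i unfolding deq_def by blast
  then show False by (simp add: w1_def w2_def)
qed

lemma po_edge:
  assumes po: "is_pushout A B C D a a' g h" and i: "0 < i" "i \<le> D"
    and e: "\<And>b. b \<le> B \<Longrightarrow> g b \<noteq> i - 1" and e': "\<And>c. c \<le> C \<Longrightarrow> h c \<noteq> i"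
    and b: "b \<le> B" "g b = i" and c: "c \<le> C" "h c = i - 1"
  shows False
proof -
  define u where "u b = (if i < g b then 1 else 0::nat)" for b
  define v where "v c = (if i - 1 \<le> h c then 1 else 0::nat)" for c
  have hm: "\<And>x y. x \<le> y \<Longrightarrow> y \<le> C \<Longrightarrow> h x \<le> h y" using dh unfolding dhom_def by blast
  have gm: "\<And>x y. x \<le> y \<Longrightarrow> y \<le> B \<Longrightarrow> g x \<le> g y" using dg unfolding dhom_def by blast
  have "dhom B 1 u" unfolding dhom_def u_def using gm by (auto simp: less_le_trans)
  moreover have "dhom C 1 v" unfolding dhom_def v_def using hm by (auto intro: order_trans)
  moreover have "deq A (u \<circ> a) (v \<circ> a')" unfolding deq_def
  proof (intro allI impI)
    fix z assume z: "z \<le> A"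
    have az: "a z \<le> B" "a' z \<le> C" using z da da' unfolding dhom_def by auto
    have "g (a z) \<noteq> i - 1" "h (a' z) \<noteq> i" using e e' az by auto
    then show "(u \<circ> a) z = (v \<circ> a') z" using comm[OF z] i by (auto simp: u_def v_def)
  qed
  ultimately obtain w where w: "dhom D 1 w" "deq B (w \<circ> g) u" "deq C (w \<circ> h) v"
    using po unfolding is_pushout_def by blast
  have "w i = 0" using w(2) b unfolding deq_def u_def by force
  moreover have "w (i - 1) = 1" using w(3) c unfolding deq_def v_def by force
  moreover have "w (i - 1) \<le> w i" using w(1) i unfolding dhom_def by auto
  ultimately show False by simp
qed

lemma bc1:
  assumes pb: "is_pullback A B C D a a' g h" and po: "is_pushout A B C D a a' g h" and i: "i \<le> D"
    and n1: "\<not> (\<exists>j. {x. x \<le> B \<and> g x = i} = {j})" and n2: "\<not> (\<exists>j. {x. x \<le> C \<and> h x = i} = {j})"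
  shows False
proof -
  note S = dsq.po_empty_two[OF sym pushout_sym[OF po]]
  from nonsingle[OF n1] nonsingle[OF n2] show False
  proof (elim disjE exE conjE)
    assume "{x. x \<le> B \<and> g x = i} = {}" "{x. x \<le> C \<and> h x = i} = {}"
    then show False using po_both_empty[OF po i] by blast
  next
    fix c1 c2 assume "{x. x \<le> B \<and> g x = i} = {}" "c1 < c2" "c1 \<in> {x. x \<le> C \<and> h x = i}" "c2 \<in> {x. x \<le> C \<and> h x = i}"
    then show False using po_empty_two[OF po, of i c1 c2] by blast
  next
    fix b1 b2 assume "{x. x \<le> C \<and> h x = i} = {}" "b1 < b2" "b1 \<in> {x. x \<le> B \<and> g x = i}" "b2 \<in> {x. x \<le> B \<and> g x = i}"
    then show False using S[of i b1 b2] by blast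
  next
    fix b1 b2 c1 c2 assume "b1 < b2" "b1 \<in> {x. x \<le> B \<and> g x = i}" "b2 \<in> {x. x \<le> B \<and> g x = i}"
      "c1 < c2" "c1 \<in> {x. x \<le> C \<and> h x = i}" "c2 \<in> {x. x \<le> C \<and> h x = i}"
    then show False using pb_two[OF pb, of b1 b2 i c1 c2] by auto
  qed
qed

lemma bc2:
  assumes po: "is_pushout A B C D a a' g h" and i: "0 < i" "i \<le> D"
    and n1: "\<not> {i - 1, i} \<subseteq> g ` {0..B}" and n2: "\<not> {i - 1, i} \<subseteq> h ` {0..C}"
  shows False
proof -
  note E1 = po_both_empty[OF po, of "i - 1"] po_both_empty[OF po, of i]
  note S = dsq.po_edge[OF sym pushout_sym[OF po] i]
  have g1: "(\<forall>b. b \<le> B \<longrightarrow> g b \<noteq> i - 1) \<or> (\<forall>b. b \<le> B \<longrightarrow> g b \<noteq> i)" proof -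
    have "\<not> (i - 1 \<in> g ` {0..B} \<and> i \<in> g ` {0..B})" using n1 by simp
    then show ?thesis by (metis atLeastAtMost_iff image_eqI le0)
  qed
  have h1: "(\<forall>c. c \<le> C \<longrightarrow> h c \<noteq> i - 1) \<or> (\<forall>c. c \<le> C \<longrightarrow> h c \<noteq> i)" proof -
    have "\<not> (i - 1 \<in> h ` {0..C} \<and> i \<in> h ` {0..C})" using n2 by simp
    then show ?thesis by (metis atLeastAtMost_iff image_eqI le0)
  qed
  have x1: "\<not> ((\<forall>b. b \<le> B \<longrightarrow> g b \<noteq> i - 1) \<and> (\<forall>c. c \<le> C \<longrightarrow> h c \<noteq> i - 1))"
  proof
    assume a: "(\<forall>b. b \<le> B \<longrightarrow> g b \<noteq> i - 1) \<and> (\<forall>c. c \<le> C \<longrightarrow> h c \<noteq> i - 1)"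
    show False by (rule po_both_empty[OF po, of "i - 1"]) (use a i in auto)
  qed
  have x2: "\<not> ((\<forall>b. b \<le> B \<longrightarrow> g b \<noteq> i) \<and> (\<forall>c. c \<le> C \<longrightarrow> h c \<noteq> i))"
  proof
    assume a: "(\<forall>b. b \<le> B \<longrightarrow> g b \<noteq> i) \<and> (\<forall>c. c \<le> C \<longrightarrow> h c \<noteq> i)"
    show False by (rule po_both_empty[OF po, of "i"]) (use a i in auto)
  qed
  show False
  proof (cases "\<forall>b. b \<le> B \<longrightarrow> g b \<noteq> i - 1")
    case True
    then have hc: "\<forall>c. c \<le> C \<longrightarrow> h c \<noteq> i" using h1 x1 by blast
    then have "\<not> (\<forall>b. b \<le> B \<longrightarrow> g b \<noteq> i)" using x2 by blast
    then obtain b where b: "b \<le> B" "g b = i" by blast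
    have "\<not> (\<forall>c. c \<le> C \<longrightarrow> h c \<noteq> i - 1)" using x1 True by blast
    then obtain c where c: "c \<le> C" "h c = i - 1" by blast
    show False using po_edge[OF po i _ _ b c] True hc by blast
  next
    case False
    then have gb: "\<forall>b. b \<le> B \<longrightarrow> g b \<noteq> i" using g1 by blast
    then have hc: "\<forall>c. c \<le> C \<longrightarrow> h c \<noteq> i - 1" using h1 x2 by blast
    obtain b where b: "b \<le> B" "g b = i - 1" using False by blast
    have "\<not> (\<forall>c. c \<le> C \<longrightarrow> h c \<noteq> i)" using x2 gb by blast
    then obtain c where c: "c \<le> C" "h c = i" by blast
    show False using S[of c b] c b gb hc by blast
  qed
qed

end


definition cnt :: "nat \<Rightarrow> (nat \<Rightarrow> nat) \<Rightarrow> nat \<Rightarrow> nat" where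
  "cnt m \<phi> j = card {y. y \<le> m \<and> \<phi> y = j}"

lemma pos_cnt: "pos (cnt m \<phi>) i = card {y. y \<le> m \<and> \<phi> y < i}"
proof (induction i)
  case 0 then show ?case by (simp add: pos_def)
next
  case (Suc i)
  have "{y. y \<le> m \<and> \<phi> y < Suc i} = {y. y \<le> m \<and> \<phi> y < i} \<union> {y. y \<le> m \<and> \<phi> y = i}" by auto
  moreover have "card ({y. y \<le> m \<and> \<phi> y < i} \<union> {y. y \<le> m \<and> \<phi> y = i}) =
      card {y. y \<le> m \<and> \<phi> y < i} + card {y. y \<le> m \<and> \<phi> y = i}"
    by (rule card_Un_disjoint) auto
  ultimately show ?case using Suc by (simp add: pos_Suc cnt_def)
qed

lemma cnt_lt:
  assumes d: "dhom m n \<phi>" and x: "x \<le> m"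
  shows "\<phi> x < i \<longleftrightarrow> x < pos (cnt m \<phi>) i"
proof
  assume a: "\<phi> x < i"
  have "{0..x} \<subseteq> {y. y \<le> m \<and> \<phi> y < i}"
  proof
    fix y assume "y \<in> {0..x}"
    then have "y \<le> x" by simp
    then have "\<phi> y \<le> \<phi> x" using d x unfolding dhom_def by blast
    then show "y \<in> {y. y \<le> m \<and> \<phi> y < i}" using a x \<open>y \<le> x\<close> by simp
  qed
  then have "card {0..x} \<le> card {y. y \<le> m \<and> \<phi> y < i}" by (rule card_mono[rotated]) auto
  then show "x < pos (cnt m \<phi>) i" by (simp add: pos_cnt)
next
  assume a: "x < pos (cnt m \<phi>) i"
  show "\<phi> x < i"
  proof (rule ccontr)
    assume "\<not> \<phi> x < i"
    have "{y. y \<le> m \<and> \<phi> y < i} \<subseteq> {0..<x}"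
    proof
      fix y assume y: "y \<in> {y. y \<le> m \<and> \<phi> y < i}"
      have "y < x"
      proof (rule ccontr)
        assume "\<not> y < x"
        then have "\<phi> x \<le> \<phi> y" using d y unfolding dhom_def by auto
        then show False using y \<open>\<not> \<phi> x < i\<close> by simp
      qed
      then show "y \<in> {0..<x}" by simp
    qed
    then have "card {y. y \<le> m \<and> \<phi> y < i} \<le> card {0..<x}" by (rule card_mono[rotated]) auto
    then show False using a by (simp add: pos_cnt)
  qed
qed

lemma cnt_tot:
  assumes d: "dhom m n \<phi>"
  shows "pos (cnt m \<phi>) (Suc n) = Suc m"
proof -
  have "{y. y \<le> m \<and> \<phi> y < Suc n} = {0..m}" using d unfolding dhom_def by auto
  then show ?thesis by (simp add: pos_cnt)
qed

lemma cnt_fib: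
  assumes d: "dhom m n \<phi>" and x: "x \<le> m"
  shows "fib (cnt m \<phi>) x = \<phi> x"
proof (rule fib_eq)
  show "pos (cnt m \<phi>) (\<phi> x) \<le> x" using cnt_lt[OF d x, of "\<phi> x"] by simp
  show "x < pos (cnt m \<phi>) (\<phi> x) + cnt m \<phi> (\<phi> x)"
    using cnt_lt[OF d x, of "Suc (\<phi> x)"] by (simp add: pos_Suc)
qed

lemma cnt_pos_iff:
  "0 < cnt m \<phi> j \<longleftrightarrow> j \<in> \<phi> ` {0..m}"
proof -
  have "finite {y. y \<le> m \<and> \<phi> y = j}" by simp
  then have "0 < cnt m \<phi> j \<longleftrightarrow> {y. y \<le> m \<and> \<phi> y = j} \<noteq> {}" unfolding cnt_def by (simp add: card_gt_0_iff)
  also have "\<dots> \<longleftrightarrow> j \<in> \<phi> ` {0..m}" by auto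
  finally show ?thesis .
qed

lemma cnt_one_iff:
  "cnt m \<phi> j = 1 \<longleftrightarrow> (\<exists>k. {x. x \<le> m \<and> \<phi> x = j} = {k})"
  unfolding cnt_def by (simp add: card_1_singleton_iff)



lemma sb_compat:
  assumes "strongly_biCartesian S n I f"
  shows "compatible S n I f"
proof -
  obtain Qo Qm where cube: "is_cube S Qo Qm" and Q0: "Qo {} = n"
    and Q1: "\<forall>s\<in>S. Qo {s} = I s \<and> deq (I s) (Qm {s} {}) (f s)"
    and SQ: "\<forall>T s s'. s \<in> S \<longrightarrow> s' \<in> S \<longrightarrow> s \<noteq> s' \<longrightarrow> T \<subseteq> S - {s, s'} \<longrightarrow>
           is_pullback (Qo (T \<union> {s, s'})) (Qo (T \<union> {s})) (Qo (T \<union> {s'})) (Qo T)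
              (Qm (T \<union> {s, s'}) (T \<union> {s})) (Qm (T \<union> {s, s'}) (T \<union> {s'}))
              (Qm (T \<union> {s}) T) (Qm (T \<union> {s'}) T) \<and>
           is_pushout (Qo (T \<union> {s, s'})) (Qo (T \<union> {s})) (Qo (T \<union> {s'})) (Qo T)
              (Qm (T \<union> {s, s'}) (T \<union> {s})) (Qm (T \<union> {s, s'}) (T \<union> {s'}))
              (Qm (T \<union> {s}) T) (Qm (T \<union> {s'}) T)"
    using assms unfolding strongly_biCartesian_def by blast
  note cd = conjunct1[OF cube[unfolded is_cube_def], rule_format]
  note cc = conjunct2[OF conjunct2[OF cube[unfolded is_cube_def]], rule_format]
  have fibeq: "{x. x \<le> I s \<and> Qm {s} {} x = i} = {x. x \<le> I s \<and> f s x = i}" if "s \<in> S" for s i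
    using Q1 that unfolding deq_def by auto
  have imeq: "Qm {s} {} ` {0..I s} = f s ` {0..I s}" if "s \<in> S" for s
    using Q1 that unfolding deq_def by (intro image_cong) auto
  have key: "dsq (Qo {s, s'}) (I s) (I s') n (Qm {s, s'} {s}) (Qm {s, s'} {s'}) (Qm {s} {}) (Qm {s'} {}) \<and>
     is_pullback (Qo {s, s'}) (I s) (I s') n (Qm {s, s'} {s}) (Qm {s, s'} {s'}) (Qm {s} {}) (Qm {s'} {}) \<and>
     is_pushout (Qo {s, s'}) (I s) (I s') n (Qm {s, s'} {s}) (Qm {s, s'} {s'}) (Qm {s} {}) (Qm {s'} {})"
    if ss: "s \<in> S" "s' \<in> S" "s \<noteq> s'" for s s'
  proof (intro conjI)
    have sq: "is_pullback (Qo ({} \<union> {s, s'})) (Qo ({} \<union> {s})) (Qo ({} \<union> {s'})) (Qo {})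
              (Qm ({} \<union> {s, s'}) ({} \<union> {s})) (Qm ({} \<union> {s, s'}) ({} \<union> {s'}))
              (Qm ({} \<union> {s}) {}) (Qm ({} \<union> {s'}) {}) \<and>
           is_pushout (Qo ({} \<union> {s, s'})) (Qo ({} \<union> {s})) (Qo ({} \<union> {s'})) (Qo {})
              (Qm ({} \<union> {s, s'}) ({} \<union> {s})) (Qm ({} \<union> {s, s'}) ({} \<union> {s'}))
              (Qm ({} \<union> {s}) {}) (Qm ({} \<union> {s'}) {})"
      using SQ[rule_format, of s s' "{}"] ss by simp
    moreover have Is: "Qo {s} = I s" "Qo {s'} = I s'" using Q1 ss by auto
    ultimately show "is_pullback (Qo {s, s'}) (I s) (I s') n (Qm {s, s'} {s}) (Qm {s, s'} {s'}) (Qm {s} {}) (Qm {s'} {})"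
      "is_pushout (Qo {s, s'}) (I s) (I s') n (Qm {s, s'} {s}) (Qm {s, s'} {s'}) (Qm {s} {}) (Qm {s'} {})"
      using Q0 by simp_all
    show "dsq (Qo {s, s'}) (I s) (I s') n (Qm {s, s'} {s}) (Qm {s, s'} {s'}) (Qm {s} {}) (Qm {s'} {})"
    proof
      show "dhom (Qo {s, s'}) (I s) (Qm {s, s'} {s})" using cd[of "{s}" "{s, s'}"] Is ss by simp
      show "dhom (Qo {s, s'}) (I s') (Qm {s, s'} {s'})" using cd[of "{s'}" "{s, s'}"] Is ss by simp
      show "dhom (I s) n (Qm {s} {})" using cd[of "{}" "{s}"] Q0 Is ss by simp
      show "dhom (I s') n (Qm {s'} {})" using cd[of "{}" "{s'}"] Q0 Is ss by simp
      fix z assume z: "z \<le> Qo {s, s'}"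
      have "Qm {s, s'} {} z = Qm {s} {} (Qm {s, s'} {s} z)"
        using cc[of "{}" "{s}" "{s, s'}"] ss z unfolding deq_def by auto
      moreover have "Qm {s, s'} {} z = Qm {s'} {} (Qm {s, s'} {s'} z)"
        using cc[of "{}" "{s'}" "{s, s'}"] ss z unfolding deq_def by auto
      ultimately show "Qm {s} {} (Qm {s, s'} {s} z) = Qm {s'} {} (Qm {s, s'} {s'} z)" by simp
    qed
  qed
  show ?thesis unfolding compatible_def
  proof (intro conjI allI impI ballI)
    fix i s s' assume i: "i \<le> n" and ss: "s \<in> S" "s' \<in> S"
      and n1: "\<nexists>j. {x. x \<le> I s \<and> f s x = i} = {j}" and n2: "\<nexists>j. {x. x \<le> I s' \<and> f s' x = i} = {j}"
    show "s = s'"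
    proof (rule ccontr)
      assume "s \<noteq> s'"
      note K = key[OF ss this]
      show False using dsq.bc1[OF conjunct1[OF K] conjunct1[OF conjunct2[OF K]] conjunct2[OF conjunct2[OF K]] i]
        n1 n2 fibeq ss by simp
    qed
  next
    fix i s s' assume i: "0 < i" "i \<le> n" and ss: "s \<in> S" "s' \<in> S"
      and n1: "\<not> {i - 1, i} \<subseteq> f s ` {0..I s}" and n2: "\<not> {i - 1, i} \<subseteq> f s' ` {0..I s'}"
    show "s = s'"
    proof (rule ccontr)
      assume "s \<noteq> s'"
      note K = key[OF ss this]
      show False using dsq.bc2[OF conjunct1[OF K] conjunct2[OF conjunct2[OF K]] i]
        n1 n2 imeq ss by simp
    qed
  qed
qed



lemma compat_sb:
  assumes fin: "finite S" and dh: "\<forall>s\<in>S. dhom (I s) n (f s)" and co: "compatible S n I f"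
  shows "strongly_biCartesian S n I f"
proof -
  define cv where "cv s = cnt (I s) (f s)" for s
  define cT where "cT T i = (\<Prod>s\<in>T. cv s i)" for T i
  have BC1: "s = s'" if "i \<le> n" "s \<in> S" "s' \<in> S" "cv s i \<noteq> 1" "cv s' i \<noteq> 1" for i s s'
    using co that unfolding compatible_def cv_def cnt_one_iff by blast
  have miss: "\<not> {i - 1, i} \<subseteq> f s ` {0..I s} \<longleftrightarrow> (cv s (i - 1) = 0 \<or> cv s i = 0)" for s i
  proof -
    have z: "\<And>j. cv s j = 0 \<longleftrightarrow> j \<notin> f s ` {0..I s}"
      using cnt_pos_iff[of "I s" "f s"] unfolding cv_def by (metis neq0_conv)
    show ?thesis unfolding z insert_subset by simp
  qed
  have BC2: "s = s'" if "0 < i" "i \<le> n" "s \<in> S" "s' \<in> S"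
     "cv s (i - 1) = 0 \<or> cv s i = 0" "cv s' (i - 1) = 0 \<or> cv s' i = 0" for i s s'
  proof -
    have "\<not> {i - 1, i} \<subseteq> f s ` {0..I s}" "\<not> {i - 1, i} \<subseteq> f s' ` {0..I s'}"
      using that miss by blast+
    then show ?thesis using co that(1-4) unfolding compatible_def by blast
  qed
  have i0: "\<exists>i0\<le>n. \<forall>s\<in>S. 0 < cv s i0"
  proof (rule ccontr)
    assume "\<not> ?thesis"
    then have all: "\<forall>i\<le>n. \<exists>s\<in>S. cv s i = 0" by auto
    then obtain s0 where s0: "s0 \<in> S" "cv s0 0 = 0" by auto
    have "cv s0 i = 0" if "i \<le> n" for i
      using that
    proof (induction i)
      case 0 then show ?case using s0 by simp
    next
      case (Suc i)
      then obtain s where s: "s \<in> S" "cv s (Suc i) = 0" using all by blast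
      have "s0 = s" using BC2[of "Suc i" s0 s] Suc s s0 by simp
      then show ?case using s by simp
    qed
    moreover have "f s0 0 \<le> n" using dh s0 unfolding dhom_def by auto
    moreover have "0 < cv s0 (f s0 0)" unfolding cv_def cnt_pos_iff by auto
    ultimately show False by fastforce
  qed
  then obtain i0 where i0: "i0 \<le> n" "\<And>s. s \<in> S \<Longrightarrow> 0 < cv s i0" by blast
  have cT_zero: "cT T i = 0 \<longleftrightarrow> (\<exists>t\<in>T. cv t i = 0)" if "T \<subseteq> S" for T i
    using fin that unfolding cT_def by (simp add: finite_subset)
  have cT_one: "\<exists>t\<in>T. cv t i \<noteq> 1" if "cT T i \<noteq> 1" for T i
    using that unfolding cT_def by (metis prod.neutral)
  have cT_mono: "0 < cT T i \<and> cT T i \<le> cT T' i" if "T \<subseteq> T'" "T' \<subseteq> S" "0 < cT T' i" for T T' i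
  proof -
    have fT': "finite T'" using fin that by (blast intro: finite_subset)
    have "cT T' i = (\<Prod>s\<in>T' - T. cv s i) * cT T i"
      unfolding cT_def using prod.subset_diff[OF that(1) fT'] by simp
    then obtain P where P: "cT T' i = P * cT T i" by blast
    then have "0 < P" "0 < cT T i" using that(3) by auto
    then show ?thesis using P by simp
  qed
  have totT: "0 < pos (cT T) (Suc n)" if "T \<subseteq> S" for T
  proof -
    have "cT T i0 \<noteq> 0" using cT_zero[OF that] i0 that by auto
    then show ?thesis using tot_pos[OF i0(1)] by simp
  qed
  have cv1: "cT {s} = cv s" for s by (rule ext) (simp add: cT_def)
  have c0: "cT {} = (\<lambda>_. 1)" by (rule ext) (simp add: cT_def)
  have pos1: "pos (\<lambda>_. Suc 0) j = j" for j by (simp add: pos_def)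
  have face: "sq2 n (cT (T \<union> {s, s'})) (cT (T \<union> {s})) (cT (T \<union> {s'})) (cT T) (cv s) (cv s')"
    if ss: "s \<in> S" "s' \<in> S" "s \<noteq> s'" "T \<subseteq> S - {s, s'}" for s s' T
  proof -
    have TS: "T \<subseteq> S" and sT: "s \<notin> T" "s' \<notin> T" using ss by auto
    have finT: "finite T" using fin TS by (rule finite_subset[rotated])
    show ?thesis unfolding sq2_def sq_def sq2_axioms_def
    proof (intro conjI allI impI)
      fix i assume i: "i \<le> n"
      show "cT (T \<union> {s}) i = cT T i * cv s i" using finT sT by (simp add: cT_def mult.commute)
      show "cT (T \<union> {s'}) i = cT T i * cv s' i" using finT sT by (simp add: cT_def mult.commute)
      show "cT (T \<union> {s, s'}) i = cT T i * cv s i * cv s' i" using finT sT ss(3) by (simp add: cT_def mult_ac)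
      {
        assume "cT T i \<noteq> 1"
        then obtain t where t: "t \<in> T" "cv t i \<noteq> 1" using cT_one by blast
        have "t \<in> S" "t \<noteq> s" "t \<noteq> s'" using t TS sT by auto
        then show "cv s i = 1" "cv s' i = 1" using BC1[OF i] t ss by blast+
      }
      {
        assume "cv s i \<noteq> 1"
        then show "cv s' i = 1" using BC1[OF i] ss by blast
      }
    next
      show "0 < pos (cT (T \<union> {s, s'})) (Suc n)" using TS ss by (intro totT) auto
    next
      fix i assume i: "0 < i" "i \<le> n"
      have mT: "\<exists>t\<in>T. cv t (i - 1) = 0 \<or> cv t i = 0" if "cT T (i - 1) = 0 \<or> cT T i = 0"
        using that cT_zero[OF TS] by blast
      show "\<not> ((cT T (i - 1) = 0 \<or> cT T i = 0) \<and> (cv s (i - 1) = 0 \<or> cv s i = 0))"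
      proof
        assume a: "(cT T (i - 1) = 0 \<or> cT T i = 0) \<and> (cv s (i - 1) = 0 \<or> cv s i = 0)"
        then obtain t where t: "t \<in> T" "cv t (i - 1) = 0 \<or> cv t i = 0" using mT by blast
        have tS: "t \<in> S" using t(1) TS by blast
        have "t = s" by (rule BC2[OF i tS ss(1) t(2) conjunct2[OF a]])
        then show False using t sT by simp
      qed
      show "\<not> ((cT T (i - 1) = 0 \<or> cT T i = 0) \<and> (cv s' (i - 1) = 0 \<or> cv s' i = 0))"
      proof
        assume a: "(cT T (i - 1) = 0 \<or> cT T i = 0) \<and> (cv s' (i - 1) = 0 \<or> cv s' i = 0)"
        then obtain t where t: "t \<in> T" "cv t (i - 1) = 0 \<or> cv t i = 0" using mT by blast
        have tS: "t \<in> S" using t(1) TS by blast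
        have "t = s'" by (rule BC2[OF i tS ss(2) t(2) conjunct2[OF a]])
        then show False using t sT by simp
      qed
      show "\<not> ((cv s (i - 1) = 0 \<or> cv s i = 0) \<and> (cv s' (i - 1) = 0 \<or> cv s' i = 0))"
        using BC2[OF i ss(1) ss(2)] ss(3) by blast
    qed
  qed
  show ?thesis unfolding strongly_biCartesian_def
  proof (rule exI[of _ "\<lambda>T. pos (cT T) (Suc n) - 1"], rule exI[of _ "\<lambda>T' T. mp (cT T') (cT T)"],
      intro conjI ballI allI impI)
    show "is_cube S (\<lambda>T. pos (cT T) (Suc n) - 1) (\<lambda>T' T. mp (cT T') (cT T))"
      unfolding is_cube_def
    proof (intro conjI allI impI)
      fix T T' assume a: "T \<subseteq> T'" "T' \<subseteq> S"
      show "dhom (pos (cT T') (Suc n) - 1) (pos (cT T) (Suc n) - 1) (mp (cT T') (cT T))"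
        by (rule mp_dhom) (use cT_mono[OF a] totT[OF a(2)] in auto)
    next
      fix T assume a: "T \<subseteq> S"
      show "deq (pos (cT T) (Suc n) - 1) (mp (cT T) (cT T)) id"
        unfolding deq_def using totT[OF a] by (auto intro!: mp_id[where n=n])
    next
      fix T T' T'' assume a: "T \<subseteq> T'" "T' \<subseteq> T''" "T'' \<subseteq> S"
      have h: "\<forall>i\<le>n. 0 < cT T'' i \<longrightarrow> 0 < cT T' i \<and> cT T i \<le> cT T' i"
        using cT_mono[OF a(2,3)] cT_mono[OF a(1)] a by blast
      show "deq (pos (cT T'') (Suc n) - 1) (mp (cT T'') (cT T)) (mp (cT T') (cT T) \<circ> mp (cT T'') (cT T'))"
        unfolding deq_def using totT[OF a(3)] mp_comp[OF h] by fastforce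
    qed
  next
    show "pos (cT {}) (Suc n) - 1 = n" by (simp add: c0 pos1)
  next
    fix s assume s: "s \<in> S"
    have d: "dhom (I s) n (f s)" using dh s by blast
    show "pos (cT {s}) (Suc n) - 1 = I s" using cnt_tot[OF d] by (simp add: cv1 cv_def)
    show "deq (I s) (mp (cT {s}) (cT {})) (f s)"
      unfolding deq_def using cnt_fib[OF d] by (simp add: cv1 c0 pos1 mp_def cv_def)
  next
    fix T s s' assume "s \<in> S" "s' \<in> S" "s \<noteq> s'" "T \<subseteq> S - {s, s'}"
    note F = face[OF this]
    show "is_pullback (pos (cT (T \<union> {s, s'})) (Suc n) - 1) (pos (cT (T \<union> {s})) (Suc n) - 1)
     (pos (cT (T \<union> {s'})) (Suc n) - 1) (pos (cT T) (Suc n) - 1) (mp (cT (T \<union> {s, s'})) (cT (T \<union> {s})))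
     (mp (cT (T \<union> {s, s'})) (cT (T \<union> {s'}))) (mp (cT (T \<union> {s})) (cT T)) (mp (cT (T \<union> {s'})) (cT T))"
      by (rule sq.pullback[OF sq2.axioms(1)[OF F]])
    show "is_pushout (pos (cT (T \<union> {s, s'})) (Suc n) - 1) (pos (cT (T \<union> {s})) (Suc n) - 1)
     (pos (cT (T \<union> {s'})) (Suc n) - 1) (pos (cT T) (Suc n) - 1) (mp (cT (T \<union> {s, s'})) (cT (T \<union> {s})))
     (mp (cT (T \<union> {s, s'})) (cT (T \<union> {s'}))) (mp (cT (T \<union> {s})) (cT T)) (mp (cT (T \<union> {s'})) (cT T))"
      by (rule sq2.pushout[OF F])
  qed
qed


theorem corollary4p1p5:
  fixes S :: "'s set" and n :: nat and I :: "'s \<Rightarrow> nat" and f :: "'s \<Rightarrow> nat \<Rightarrow> nat"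
  assumes "finite S"
    and "\<forall>s\<in>S. dhom (I s) n (f s)"
  shows "strongly_biCartesian S n I f \<longleftrightarrow> compatible S n I f"
  using sb_compat compat_sb[OF assms] by blast

end
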